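(* Let $n\ge 2$ and $1\le \ell\le n-1$. Let $\mathbf{x}=(x_1,\dots,x_n)$ satisfy $x_1\le\dots\le x_\ell<0\le x_{\ell+1}\le\dots\le x_n$, and let $M=\mathbf{x}^T\mathbf{x}$, with pairwise distinct off-diagonal entries. Then for all $t\in[0,1]$, $\beta_1(t)\le(\ell-1)(n-\ell-1)$, with equality when $G_t(M)$ is the complete bipartite graph $K_{\ell,n-\ell}$ (with parts $\{1,\dots,\ell\}$ and $\{\ell+1,\dots,n\}$). Moreover $\beta_k(t)=0$ for all $k>1$ and all $t\in[0,1]$.
   Context: Betti curves of a symmetric matrix. Let $M$ be a real symmetric $n\times n$ matrix whose $\binom{n}{2}$ off-diagonal entries $M_{ij}$ ($i<j$) are pairwise distinct. The ordering matrix $\widehat{M}$ is defined by $\widehat{M}_{ij}=k$ if $M_{ij}$ is the $k$-th smallest off-diagonal entry. For $t\in[0,1]$, $G_t=G_t(M)$ is the graph on vertex set $\{1,\dots,n\}$ with edge set $\{\{i,j\} : \widehat{M}_{ij}\le t\binom{n}{2}\}$ (so edges are added in increasing order of the entries $M_{ij}$; $G_0$ has no edges and $G_1$ is complete). $X(G_t)$ is the clique complex of $G_t$ (every $k$-clique of $G_t$ is filled in by a $(k-1)$-dimensional simplex). The $i$-th Betti curve of $M$ is $\beta_i(t)=\operatorname{rank} H_i(X(G_t);\mathbf{k})$, with $H_i$ simplicial homology with coefficients in a fixed field $\mathbf{k}$. Here $\mathbf{x}$ is a row vector, so $\mathbf{x}^T\mathbf{x}$ is the $n\times n$ matrix with entries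 $x_ix_j$. *)

theory Defs
  imports Complex_Main "HOL-Library.Function_Algebras"
begin

text \<open>Symmetric matrices are represented as functions nat => nat => real, indexed by 1..n.\<close>

definition offdiag_distinct :: "(nat \<Rightarrow> nat \<Rightarrow> real) \<Rightarrow> nat \<Rightarrow> bool" where
  "offdiag_distinct M n = (\<forall>a b c d. 1 \<le> a \<and> a < b \<and> b \<le> n \<and> 1 \<le> c \<and> c < d \<and> d \<le> n
      \<and> (a, b) \<noteq> (c, d) \<longrightarrow> M a b \<noteq> M c d)"

definition ord_mat :: "(nat \<Rightarrow> nat \<Rightarrow> real) \<Rightarrow> nat \<Rightarrow> nat \<Rightarrow> nat \<Rightarrow> nat" where
  "ord_mat M n i j = card {(a, b). 1 \<le> a \<and> a < b \<and> b \<le> n \<and> M a b \<le> M i j}"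

definition Gt_edge :: "(nat \<Rightarrow> nat \<Rightarrow> real) \<Rightarrow> nat \<Rightarrow> real \<Rightarrow> nat \<Rightarrow> nat \<Rightarrow> bool" where
  "Gt_edge M n t i j = (i \<in> {1..n} \<and> j \<in> {1..n} \<and> i \<noteq> j \<and>
      real (ord_mat M n i j) \<le> t * real (n choose 2))"

definition simplices :: "(nat \<Rightarrow> nat \<Rightarrow> bool) \<Rightarrow> nat set \<Rightarrow> nat \<Rightarrow> nat set set" where
  "simplices E V k = {\<sigma>. \<sigma> \<subseteq> V \<and> card \<sigma> = Suc k \<and> (\<forall>a\<in>\<sigma>. \<forall>b\<in>\<sigma>. a \<noteq> b \<longrightarrow> E a b)}"

text \<open>Simplicial k-chains with coefficients in a field: functions supported on k-simplices
  (simplices oriented by the natural order of their vertices).\<close>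
definition chains :: "(nat \<Rightarrow> nat \<Rightarrow> bool) \<Rightarrow> nat set \<Rightarrow> nat \<Rightarrow> (nat set \<Rightarrow> 'k::field) set" where
  "chains E V k = {f. \<forall>\<sigma>. \<sigma> \<notin> simplices E V k \<longrightarrow> f \<sigma> = 0}"

text \<open>Boundary map from (k+1)-chains to k-chains:
  d[v_0..v_{k+1}] = sum_j (-1)^j [v_0..^v_j..v_{k+1}].\<close>
definition bdry :: "(nat \<Rightarrow> nat \<Rightarrow> bool) \<Rightarrow> nat set \<Rightarrow> nat \<Rightarrow> (nat set \<Rightarrow> 'k::field) \<Rightarrow> nat set \<Rightarrow> 'k" where
  "bdry E V k f \<tau> = (if \<tau> \<in> simplices E V k then
      (\<Sum>\<sigma>\<in>{\<sigma> \<in> simplices E V (Suc k). \<tau> \<subseteq> \<sigma>}.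
          (-1) ^ card {v \<in> \<sigma>. v < the_elem (\<sigma> - \<tau>)} * f \<sigma>)
    else 0)"

definition cycles :: "(nat \<Rightarrow> nat \<Rightarrow> bool) \<Rightarrow> nat set \<Rightarrow> nat \<Rightarrow> (nat set \<Rightarrow> 'k::field) set" where
  "cycles E V k = (case k of 0 \<Rightarrow> chains E V 0
     | Suc j \<Rightarrow> {f \<in> chains E V (Suc j). bdry E V j f = (\<lambda>_. 0)})"

definition boundaries :: "(nat \<Rightarrow> nat \<Rightarrow> bool) \<Rightarrow> nat set \<Rightarrow> nat \<Rightarrow> (nat set \<Rightarrow> 'k::field) set" where
  "boundaries E V k = bdry E V k ` chains E V (Suc k)"

definition chain_scale :: "'k::field \<Rightarrow> (nat set \<Rightarrow> 'k) \<Rightarrow> nat set \<Rightarrow> 'k" where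
  "chain_scale c f = (\<lambda>x. c * f x)"

definition betti :: "'k::field itself \<Rightarrow> (nat \<Rightarrow> nat \<Rightarrow> bool) \<Rightarrow> nat set \<Rightarrow> nat \<Rightarrow> nat" where
  "betti _ E V k = vector_space.dim (chain_scale :: 'k \<Rightarrow> _) (cycles E V k :: (nat set \<Rightarrow> 'k) set)
     - vector_space.dim (chain_scale :: 'k \<Rightarrow> _) (boundaries E V k :: (nat set \<Rightarrow> 'k) set)"

definition betti_curve :: "'k::field itself \<Rightarrow> (nat \<Rightarrow> nat \<Rightarrow> real) \<Rightarrow> nat \<Rightarrow> nat \<Rightarrow> real \<Rightarrow> nat" where
  "betti_curve K M n k t = betti K (Gt_edge M n t) {1..n} k"

end

theory Submission
  imports Defs
begin


interpretation CS: vector_space "chain_scale :: 'k::field \<Rightarrow> (nat set \<Rightarrow> 'k) \<Rightarrow> _"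
  by unfold_locales (auto simp: chain_scale_def fun_eq_iff algebra_simps)

lemma sum_fun_apply: "(sum f A) x = (\<Sum>a\<in>A. f a x)"
  by (induct A rule: infinite_finite_induct) auto

definition sg :: "nat set \<Rightarrow> nat \<Rightarrow> 'k::field" where
  "sg \<tau> w = (-1) ^ card {u\<in>\<tau>. u < w}"

lemma sg_sq[simp]: "sg \<tau> w * sg \<tau> w = (1::'k::field)"
  by (simp add: sg_def flip: power_add mult_2)

lemma sg_nz[simp]: "sg \<tau> w \<noteq> (0::'k::field)"
  by (simp add: sg_def)

lemma sg_insert: "finite \<tau> \<Longrightarrow> x \<notin> \<tau> \<Longrightarrow>
   sg (insert x \<tau>) w = (if x < w then -1 else 1) * (sg \<tau> w :: 'k::field)"
proof -
  assume f: "finite \<tau>" and x: "x \<notin> \<tau>"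
  show ?thesis
  proof (cases "x < w")
    case True
    then have "{u\<in>insert x \<tau>. u < w} = insert x {u\<in>\<tau>. u < w}" by auto
    then show ?thesis using f x True by (simp add: sg_def)
  next
    case False
    then have "{u\<in>insert x \<tau>. u < w} = {u\<in>\<tau>. u < w}" by auto
    then show ?thesis using False by (simp add: sg_def)
  qed
qed

lemma simplices_card: "\<sigma> \<in> simplices E V k \<Longrightarrow> card \<sigma> = Suc k"
  by (simp add: simplices_def)

lemma chain_zero: "f \<in> chains E V k \<Longrightarrow> \<sigma> \<notin> simplices E V k \<Longrightarrow> f \<sigma> = 0"
  by (simp add: chains_def)

lemma bdry_chain: "bdry E V k f \<in> chains E V k"
  by (simp add: chains_def bdry_def)

lemma bdry_alt:
  fixes f :: "nat set \<Rightarrow> 'k::field"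
  assumes V: "finite V" and tV: "\<tau> \<subseteq> V" and tc: "card \<tau> = Suc k"
    and f: "f \<in> chains E V (Suc k)"
  shows "bdry E V k f \<tau> = (\<Sum>w\<in>V-\<tau>. sg \<tau> w * f (insert w \<tau>))"
proof (cases "\<tau> \<in> simplices E V k")
  case False
  have ft: "finite \<tau>" using tV V finite_subset by blast
  have "f (insert w \<tau>) = 0" if "w \<in> V - \<tau>" for w
  proof -
    have "insert w \<tau> \<notin> simplices E V (Suc k)"
      using False tV tc that ft unfolding simplices_def by auto
    then show ?thesis using f by (simp add: chains_def)
  qed
  then show ?thesis using False by (simp add: bdry_def)
next
  case True
  have ft: "finite \<tau>" using tV V finite_subset by blast
  let ?W = "{w\<in>V-\<tau>. insert w \<tau> \<in> simplices E V (Suc k)}"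
  have img: "{\<sigma> \<in> simplices E V (Suc k). \<tau> \<subseteq> \<sigma>} = (\<lambda>w. insert w \<tau>) ` ?W"
  proof (intro equalityI subsetI)
    fix \<sigma> assume s: "\<sigma> \<in> {\<sigma> \<in> simplices E V (Suc k). \<tau> \<subseteq> \<sigma>}"
    then have "card \<sigma> = Suc (Suc k)" "\<tau> \<subseteq> \<sigma>" "\<sigma> \<subseteq> V" by (auto simp: simplices_def)
    moreover have "finite \<sigma>" using \<open>\<sigma> \<subseteq> V\<close> V finite_subset by blast
    ultimately have "card (\<sigma> - \<tau>) = 1" using tc by (simp add: card_Diff_subset ft)
    then obtain w where w: "\<sigma> - \<tau> = {w}" by (auto simp: card_Suc_eq)
    then have "\<sigma> = insert w \<tau>" using \<open>\<tau> \<subseteq> \<sigma>\<close> by auto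
    then show "\<sigma> \<in> (\<lambda>w. insert w \<tau>) ` ?W" using s w \<open>\<sigma> \<subseteq> V\<close> by auto
  qed auto
  have inj: "inj_on (\<lambda>w. insert w \<tau>) ?W"
    by (rule inj_onI) (metis Diff_iff insert_Diff1 insert_absorb2 insert_iff mem_Collect_eq singleton_insert_inj_eq)
  have "bdry E V k f \<tau> = (\<Sum>\<sigma>\<in>{\<sigma> \<in> simplices E V (Suc k). \<tau> \<subseteq> \<sigma>}.
          (-1) ^ card {v \<in> \<sigma>. v < the_elem (\<sigma> - \<tau>)} * f \<sigma>)"
    using True by (simp add: bdry_def)
  also have "\<dots> = (\<Sum>w\<in>?W. (-1) ^ card {v \<in> insert w \<tau>. v < the_elem (insert w \<tau> - \<tau>)} * f (insert w \<tau>))"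
    unfolding img by (subst sum.reindex[OF inj]) simp
  also have "\<dots> = (\<Sum>w\<in>?W. sg \<tau> w * f (insert w \<tau>))"
  proof (rule sum.cong[OF refl])
    fix w assume "w \<in> ?W"
    then have "insert w \<tau> - \<tau> = {w}" "{v \<in> insert w \<tau>. v < w} = {v\<in>\<tau>. v < w}" by auto
    then show "(-1) ^ card {v \<in> insert w \<tau>. v < the_elem (insert w \<tau> - \<tau>)} * f (insert w \<tau>) = sg \<tau> w * f (insert w \<tau>)"
      by (simp add: sg_def)
  qed
  also have "\<dots> = (\<Sum>w\<in>V-\<tau>. sg \<tau> w * f (insert w \<tau>))"
    by (rule sum.mono_neutral_left) (use V f in \<open>auto simp: chains_def\<close>)
  finally show ?thesis .
qed

lemma bdry_add: "bdry E V k (f + g) = bdry E V k f + bdry E V k (g :: nat set \<Rightarrow> 'k::field)"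
  by (simp add: fun_eq_iff bdry_def sum.distrib algebra_simps)

lemma bdry_diff: "bdry E V k (f - g) = bdry E V k f - bdry E V k (g :: nat set \<Rightarrow> 'k::field)"
  by (simp add: fun_eq_iff bdry_def sum_subtractf algebra_simps)

lemma bdry_scale: "bdry E V k (chain_scale c f) = chain_scale c (bdry E V k (f :: nat set \<Rightarrow> 'k::field))"
  by (simp add: fun_eq_iff bdry_def chain_scale_def sum_distrib_left algebra_simps)

lemma bdry_zero: "bdry E V k (0 :: nat set \<Rightarrow> 'k::field) = 0"
  by (simp add: fun_eq_iff bdry_def)

lemma bdry_sum: "bdry E V k (\<Sum>a\<in>A. F a) = (\<Sum>a\<in>A. bdry E V k (F a :: nat set \<Rightarrow> 'k::field))"
proof (induct A rule: infinite_finite_induct)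
  case (infinite A) then show ?case by (simp only: sum.infinite[OF infinite] bdry_zero)
next
  case empty then show ?case by (simp only: sum.empty bdry_zero)
next
  case (insert a A) then show ?case by (simp only: sum.insert[OF insert(1,2)] bdry_add)
qed

lemma chains_add: "f \<in> chains E V k \<Longrightarrow> g \<in> chains E V k \<Longrightarrow> f + g \<in> chains E V k"
  by (simp add: chains_def)
lemma chains_diff: "f \<in> chains E V k \<Longrightarrow> g \<in> chains E V k \<Longrightarrow> f - g \<in> chains E V k"
  by (simp add: chains_def)
lemma chains_scale: "f \<in> chains E V k \<Longrightarrow> chain_scale c f \<in> chains E V k"
  by (simp add: chains_def chain_scale_def)
lemma chains_zero: "0 \<in> chains E V k"
  by (simp add: chains_def)
lemma chains_sum: "(\<And>a. a \<in> A \<Longrightarrow> F a \<in> chains E V k) \<Longrightarrow> (\<Sum>a\<in>A. F a) \<in> chains E V k"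
proof (induct A rule: infinite_finite_induct)
  case (insert a A) then show ?case by (simp only: sum.insert[OF insert(1,2)]) (rule chains_add; simp)
qed (simp_all add: chains_zero)


lemma antisym_sum_aux:
  fixes F :: "nat \<Rightarrow> nat \<Rightarrow> 'a::ab_group_add"
  assumes "finite A"
  shows "(\<forall>w\<in>A. \<forall>u\<in>A. w \<noteq> u \<longrightarrow> F w u = - F u w) \<longrightarrow> (\<Sum>w\<in>A. \<Sum>u\<in>A-{w}. F w u) = 0"
  using assms
proof (induct A rule: finite_induct)
  case empty then show ?case by simp
next
  case (insert a A)
  show ?case
  proof (intro impI)
    assume as: "\<forall>w\<in>insert a A. \<forall>u\<in>insert a A. w \<noteq> u \<longrightarrow> F w u = - F u w"
    have as': "\<forall>w\<in>A. \<forall>u\<in>A. w \<noteq> u \<longrightarrow> F w u = - F u w"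
      using as by blast
    have IH: "(\<Sum>w\<in>A. \<Sum>u\<in>A-{w}. F w u) = 0"
      using insert.hyps(3) as' by blast
    have e0: "insert a A - {a} = A" using insert.hyps(2) by blast
    have "(\<Sum>w\<in>insert a A. \<Sum>u\<in>insert a A-{w}. F w u)
       = (\<Sum>u\<in>insert a A-{a}. F a u) + (\<Sum>w\<in>A. \<Sum>u\<in>insert a A-{w}. F w u)"
      by (rule sum.insert[OF insert.hyps(1,2)])
    also have "(\<Sum>u\<in>insert a A-{a}. F a u) = (\<Sum>u\<in>A. F a u)" by (simp only: e0)
    also have "(\<Sum>w\<in>A. \<Sum>u\<in>insert a A-{w}. F w u) = (\<Sum>w\<in>A. F w a + (\<Sum>u\<in>A-{w}. F w u))"
    proof (rule sum.cong[OF refl])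
      fix w assume w: "w \<in> A"
      then have e: "insert a A - {w} = insert a (A - {w})" using insert.hyps(2) by blast
      have "finite (A - {w})" "a \<notin> A - {w}" using insert.hyps(1,2) by auto
      then show "(\<Sum>u\<in>insert a A-{w}. F w u) = F w a + (\<Sum>u\<in>A-{w}. F w u)"
        unfolding e by (rule sum.insert)
    qed
    also have "\<dots> = (\<Sum>w\<in>A. F w a) + (\<Sum>w\<in>A. \<Sum>u\<in>A-{w}. F w u)"
      by (rule sum.distrib)
    also have "\<dots> = (\<Sum>w\<in>A. F w a)" by (simp only: IH add_0_right)
    also have "(\<Sum>u\<in>A. F a u) + (\<Sum>w\<in>A. F w a) = (\<Sum>u\<in>A. F a u + F u a)"
      by (rule sum.distrib[symmetric])
    also have "\<dots> = 0"
    proof (rule sum.neutral, rule ballI)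
      fix u assume u: "u \<in> A"
      then have "a \<noteq> u" using insert.hyps(2) by blast
      then have "F a u = - F u a" using u as by blast
      then show "F a u + F u a = 0" by simp
    qed
    finally show "(\<Sum>w\<in>insert a A. \<Sum>u\<in>insert a A-{w}. F w u) = 0" .
  qed
qed

lemma antisym_sum:
  fixes F :: "nat \<Rightarrow> nat \<Rightarrow> 'a::ab_group_add"
  assumes "finite A" "\<And>w u. w \<in> A \<Longrightarrow> u \<in> A \<Longrightarrow> w \<noteq> u \<Longrightarrow> F w u = - F u w"
  shows "(\<Sum>w\<in>A. \<Sum>u\<in>A-{w}. F w u) = 0"
  using antisym_sum_aux[OF assms(1), of F] assms(2) by blast

lemma bdry_bdry:
  fixes f :: "nat set \<Rightarrow> 'k::field"
  assumes V: "finite V" and f: "f \<in> chains E V (Suc (Suc k))"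
  shows "bdry E V k (bdry E V (Suc k) f) = 0"
proof
  fix \<tau>
  show "bdry E V k (bdry E V (Suc k) f) \<tau> = 0 \<tau>"
  proof (cases "\<tau> \<in> simplices E V k")
    case False then show ?thesis by (simp add: bdry_def)
  next
    case True
    then have tV: "\<tau> \<subseteq> V" and tc: "card \<tau> = Suc k" by (auto simp: simplices_def)
    have ft: "finite \<tau>" using tV V finite_subset by blast
    let ?A = "V - \<tau>"
    let ?F = "\<lambda>w u. sg \<tau> w * (sg (insert w \<tau>) u * f (insert u (insert w \<tau>)))"
    have "bdry E V k (bdry E V (Suc k) f) \<tau> = (\<Sum>w\<in>?A. sg \<tau> w * bdry E V (Suc k) f (insert w \<tau>))"
      by (rule bdry_alt[OF V tV tc bdry_chain])
    also have "\<dots> = (\<Sum>w\<in>?A. \<Sum>u\<in>?A-{w}. ?F w u)"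
    proof (rule sum.cong[OF refl])
      fix w assume w: "w \<in> ?A"
      have "bdry E V (Suc k) f (insert w \<tau>) = (\<Sum>u\<in>V - insert w \<tau>. sg (insert w \<tau>) u * f (insert u (insert w \<tau>)))"
        by (rule bdry_alt[OF V _ _ f]) (use w tV tc ft in auto)
      moreover have "V - insert w \<tau> = ?A - {w}" by auto
      ultimately show "sg \<tau> w * bdry E V (Suc k) f (insert w \<tau>) = (\<Sum>u\<in>?A-{w}. ?F w u)"
        by (simp add: sum_distrib_left)
    qed
    also have "\<dots> = 0"
    proof (rule antisym_sum)
      show "finite ?A" using V by simp
      fix w u assume wu: "w \<in> ?A" "u \<in> ?A" "w \<noteq> u"
      have e: "insert u (insert w \<tau>) = insert w (insert u \<tau>)" by (rule insert_commute)
      have s1: "sg (insert w \<tau>) u = (if w < u then -1 else 1) * (sg \<tau> u :: 'k)"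
        using wu ft by (simp add: sg_insert)
      have s2: "sg (insert u \<tau>) w = (if u < w then -1 else 1) * (sg \<tau> w :: 'k)"
        using wu ft by (simp add: sg_insert)
      show "?F w u = - ?F u w"
        unfolding s1 s2 e using wu(3) by (cases "w < u") auto
    qed
    finally show ?thesis by simp
  qed
qed


lemma sum_single:
  assumes "finite A" "\<And>w. w \<in> A \<Longrightarrow> w \<noteq> v \<Longrightarrow> g w = 0"
  shows "sum g A = (if v \<in> A then g v else (0::'a::comm_monoid_add))"
proof (cases "v \<in> A")
  case True
  then show ?thesis using assms by (simp add: sum.remove)
next
  case False then show ?thesis using assms by (auto intro!: sum.neutral)
qed

definition cone :: "(nat \<Rightarrow> nat \<Rightarrow> bool) \<Rightarrow> nat set \<Rightarrow> nat \<Rightarrow> nat \<Rightarrow> (nat set \<Rightarrow> 'k::field) \<Rightarrow> nat set \<Rightarrow> 'k" where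
  "cone E V v k f \<rho> = (if \<rho> \<in> simplices E V (Suc k) \<and> v \<in> \<rho> then sg (\<rho> - {v}) v * f (\<rho> - {v}) else 0)"

definition jn :: "(nat \<Rightarrow> nat \<Rightarrow> bool) \<Rightarrow> nat set \<Rightarrow> nat \<Rightarrow> nat set \<Rightarrow> bool" where
  "jn E V v \<sigma> = (insert v \<sigma> \<subseteq> V \<and> (\<forall>a\<in>insert v \<sigma>. \<forall>b\<in>insert v \<sigma>. a \<noteq> b \<longrightarrow> E a b))"

lemma cone_chain: "cone E V v k f \<in> chains E V (Suc k)"
  by (simp add: chains_def cone_def)

lemma jn_simplex:
  assumes "jn E V v \<sigma>" "\<sigma> \<in> simplices E V k" "v \<notin> \<sigma>" "finite V"
  shows "insert v \<sigma> \<in> simplices E V (Suc k)"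
proof -
  have "finite \<sigma>" using assms by (meson finite_subset jn_def subset_insertI subset_trans)
  then show ?thesis using assms by (auto simp: simplices_def jn_def)
qed



lemma homotopy:
  fixes f :: "nat set \<Rightarrow> 'k::field"
  assumes V: "finite V" and f: "f \<in> chains E V (Suc j)"
    and H: "\<And>\<sigma>. f \<sigma> \<noteq> 0 \<Longrightarrow> jn E V v \<sigma>"
  shows "bdry E V (Suc j) (cone E V v (Suc j) f) + cone E V v j (bdry E V j f) = f"
proof
  fix \<tau>
  show "(bdry E V (Suc j) (cone E V v (Suc j) f) + cone E V v j (bdry E V j f)) \<tau> = f \<tau>"
  proof (cases "\<tau> \<in> simplices E V (Suc j)")
    case False
    then show ?thesis using f by (simp add: bdry_def cone_def chains_def)
  next
    case True
    then have tV: "\<tau> \<subseteq> V" and tc: "card \<tau> = Suc (Suc j)" by (auto simp: simplices_def)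
    have ft: "finite \<tau>" using tV V finite_subset by blast
    have B: "bdry E V (Suc j) (cone E V v (Suc j) f) \<tau> = (\<Sum>w\<in>V-\<tau>. sg \<tau> w * cone E V v (Suc j) f (insert w \<tau>))"
      by (rule bdry_alt[OF V tV tc cone_chain])
    show ?thesis
    proof (cases "v \<in> \<tau>")
      case False
      have C: "cone E V v j (bdry E V j f) \<tau> = 0" using False by (simp add: cone_def)
      have "(\<Sum>w\<in>V-\<tau>. sg \<tau> w * cone E V v (Suc j) f (insert w \<tau>))
          = (if v \<in> V-\<tau> then sg \<tau> v * cone E V v (Suc j) f (insert v \<tau>) else 0)"
        by (rule sum_single) (use V False in \<open>auto simp: cone_def\<close>)
      also have "\<dots> = f \<tau>"
      proof (cases "f \<tau> = 0")
        case True
        then show ?thesis using False by (auto simp: cone_def)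
      next
        case nz: False
        have j: "jn E V v \<tau>" using H nz .
        then have vV: "v \<in> V" by (simp add: jn_def)
        have "insert v \<tau> \<in> simplices E V (Suc (Suc j))"
          using jn_simplex[OF j True False V] .
        moreover have "insert v \<tau> - {v} = \<tau>" using False by auto
        ultimately show ?thesis using vV False by (simp add: cone_def mult.assoc[symmetric])
      qed
      finally show ?thesis using B C by simp
    next
      case True2: True
      define \<sigma>0 where "\<sigma>0 = \<tau> - {v}"
      have t0: "\<tau> = insert v \<sigma>0" "v \<notin> \<sigma>0" using True2 by (auto simp: \<sigma>0_def)
      have f0: "finite \<sigma>0" using ft by (simp add: \<sigma>0_def)
      have s0V: "\<sigma>0 \<subseteq> V" using tV by (auto simp: \<sigma>0_def)
      have s0c: "card \<sigma>0 = Suc j" using tc True2 ft by (simp add: \<sigma>0_def)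
      have "bdry E V j f \<sigma>0 = (\<Sum>w\<in>V-\<sigma>0. sg \<sigma>0 w * f (insert w \<sigma>0))"
        by (rule bdry_alt[OF V s0V s0c f])
      also have "V - \<sigma>0 = insert v (V - \<tau>)" using tV True2 by (auto simp: \<sigma>0_def)
      finally have g: "bdry E V j f \<sigma>0 = sg \<sigma>0 v * f \<tau> + (\<Sum>w\<in>V-\<tau>. sg \<sigma>0 w * f (insert w \<sigma>0))"
        using V t0 by simp
      have C: "cone E V v j (bdry E V j f) \<tau> = sg \<sigma>0 v * bdry E V j f \<sigma>0"
        using True True2 by (simp add: cone_def \<sigma>0_def)
      have T: "cone E V v (Suc j) f (insert w \<tau>) = sg (insert w \<sigma>0) v * f (insert w \<sigma>0)" if w: "w \<in> V - \<tau>" for w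
      proof -
        have e: "insert w \<tau> - {v} = insert w \<sigma>0" using w t0 by auto
        show ?thesis
        proof (cases "insert w \<tau> \<in> simplices E V (Suc (Suc j))")
          case True
          then show ?thesis using e by (simp add: cone_def t0)
        next
          case False
          have "f (insert w \<sigma>0) = 0"
          proof (rule ccontr)
            assume "f (insert w \<sigma>0) \<noteq> 0"
            then have j: "jn E V v (insert w \<sigma>0)" and ws: "insert w \<sigma>0 \<in> simplices E V (Suc j)"
              using H f by (auto simp: chains_def)
            have "insert v (insert w \<sigma>0) \<in> simplices E V (Suc (Suc j))"
              by (rule jn_simplex[OF j ws _ V]) (use w t0 in auto)
            moreover have "insert v (insert w \<sigma>0) = insert w \<tau>" using t0 by auto
            ultimately show False using False by simp
          qed
          then show ?thesis using False by (simp add: cone_def)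
        qed
      qed
      have "bdry E V (Suc j) (cone E V v (Suc j) f) \<tau> = (\<Sum>w\<in>V-\<tau>. sg \<tau> w * (sg (insert w \<sigma>0) v * f (insert w \<sigma>0)))"
        using B T by simp
      also have "\<dots> = (\<Sum>w\<in>V-\<tau>. - (sg \<sigma>0 v * (sg \<sigma>0 w * f (insert w \<sigma>0))))"
      proof (rule sum.cong[OF refl])
        fix w assume w: "w \<in> V - \<tau>"
        then have "w \<noteq> v" "w \<notin> \<sigma>0" using t0 by auto
        then show "sg \<tau> w * (sg (insert w \<sigma>0) v * f (insert w \<sigma>0)) = - (sg \<sigma>0 v * (sg \<sigma>0 w * f (insert w \<sigma>0)))"
          using f0 t0 by (auto simp: sg_insert)
      qed
      finally show ?thesis using C g
        by (simp add: sum_negf algebra_simps sum_distrib_left)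
    qed
  qed
qed




lemma jn_mono: "jn E V v \<sigma>' \<Longrightarrow> \<sigma> \<subseteq> \<sigma>' \<Longrightarrow> jn E V v \<sigma>"
  unfolding jn_def by blast

lemma bdry_supp:
  fixes f :: "nat set \<Rightarrow> 'k::field"
  assumes V: "finite V" and f: "f \<in> chains E V (Suc k)"
    and H: "\<And>\<sigma>. f \<sigma> \<noteq> 0 \<Longrightarrow> jn E V v \<sigma>"
    and nz: "bdry E V k f \<tau> \<noteq> 0"
  shows "jn E V v \<tau>"
proof -
  have t: "\<tau> \<in> simplices E V k" using nz by (auto simp: bdry_def split: if_splits)
  then have "bdry E V k f \<tau> = (\<Sum>w\<in>V-\<tau>. sg \<tau> w * f (insert w \<tau>))"
    by (intro bdry_alt[OF V _ _ f]) (auto simp: simplices_def)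
  with nz obtain w where "sg \<tau> w * f (insert w \<tau>) \<noteq> 0"
    by (metis (no_types, lifting) sum.neutral)
  then have "jn E V v (insert w \<tau>)" using H by auto
  then show ?thesis by (rule jn_mono) auto
qed

lemma cone_zero: "cone E V v k (0 :: nat set \<Rightarrow> 'k::field) = 0"
  by (simp add: fun_eq_iff cone_def)

lemma cone_kill:
  fixes z :: "nat set \<Rightarrow> 'k::field"
  assumes V: "finite V" and pq: "E p q" "E q p"
    and cover: "\<And>\<sigma>. \<sigma> \<in> simplices E V (Suc (Suc j)) \<Longrightarrow> jn E V p \<sigma> \<or> jn E V q \<sigma>"
    and z: "z \<in> cycles E V (Suc (Suc j))"
  shows "z \<in> boundaries E V (Suc (Suc j))"
proof -
  have zc: "z \<in> chains E V (Suc (Suc j))" and zb: "bdry E V (Suc j) z = 0"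
    using z by (auto simp: cycles_def)
  define zp where "zp = (\<lambda>\<sigma>. if jn E V p \<sigma> then z \<sigma> else 0)"
  define zq where "zq = (\<lambda>\<sigma>. if jn E V p \<sigma> then 0 else z \<sigma>)"
  have zpc: "zp \<in> chains E V (Suc (Suc j))" using zc by (auto simp: zp_def chains_def)
  have zqc: "zq \<in> chains E V (Suc (Suc j))" using zc by (auto simp: zq_def chains_def)
  have zsum: "z = zp + zq" by (simp add: fun_eq_iff zp_def zq_def)
  have Hp: "zp \<sigma> \<noteq> 0 \<Longrightarrow> jn E V p \<sigma>" for \<sigma> by (auto simp: zp_def split: if_splits)
  have Hq: "zq \<sigma> \<noteq> 0 \<Longrightarrow> jn E V q \<sigma>" for \<sigma>
  proof -
    assume a: "zq \<sigma> \<noteq> 0"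
    then have "z \<sigma> \<noteq> 0" "\<not> jn E V p \<sigma>" by (auto simp: zq_def split: if_splits)
    then have "\<sigma> \<in> simplices E V (Suc (Suc j))" using zc by (auto simp: chains_def)
    then show ?thesis using cover \<open>\<not> jn E V p \<sigma>\<close> by blast
  qed
  define g where "g = bdry E V (Suc j) zq"
  have gneg: "g = - bdry E V (Suc j) zp"
  proof -
    have "bdry E V (Suc j) zp + bdry E V (Suc j) zq = 0"
      using zb zsum bdry_add by metis
    then show ?thesis unfolding g_def by (simp add: eq_neg_iff_add_eq_0 add.commute)
  qed
  have gsupp: "g \<tau> \<noteq> 0 \<Longrightarrow> jn E V p \<tau> \<and> jn E V q \<tau>" for \<tau>
  proof
    assume a: "g \<tau> \<noteq> 0"
    then show "jn E V q \<tau>" unfolding g_def by (rule bdry_supp[OF V zqc Hq, rotated])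
    from a have "bdry E V (Suc j) zp \<tau> \<noteq> 0" unfolding gneg by simp
    then show "jn E V p \<tau>" by (rule bdry_supp[OF V zpc Hp, rotated])
  qed
  have hq: "bdry E V (Suc (Suc j)) (cone E V q (Suc (Suc j)) zq) + cone E V q (Suc j) g = zq"
    unfolding g_def by (rule homotopy[OF V zqc Hq])
  define z' where "z' = zp + cone E V q (Suc j) g"
  have z'c: "z' \<in> chains E V (Suc (Suc j))" unfolding z'_def by (rule chains_add[OF zpc cone_chain])
  have z'eq: "z = z' + bdry E V (Suc (Suc j)) (cone E V q (Suc (Suc j)) zq)"
    using zsum hq unfolding z'_def by (metis add.assoc add.commute)
  have z'b: "bdry E V (Suc j) z' = 0"
  proof -
    have "bdry E V (Suc j) z = bdry E V (Suc j) z' + bdry E V (Suc j) (bdry E V (Suc (Suc j)) (cone E V q (Suc (Suc j)) zq))"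
      using z'eq bdry_add by metis
    also have "bdry E V (Suc j) (bdry E V (Suc (Suc j)) (cone E V q (Suc (Suc j)) zq)) = 0"
      by (rule bdry_bdry[OF V cone_chain])
    finally show ?thesis using zb by (metis add.right_neutral)
  qed
  have Hz': "z' \<sigma> \<noteq> 0 \<Longrightarrow> jn E V p \<sigma>" for \<sigma>
  proof (cases "jn E V p \<sigma>")
    case False
    assume a: "z' \<sigma> \<noteq> 0"
    then have "cone E V q (Suc j) g \<sigma> \<noteq> 0" using False by (simp add: z'_def zp_def)
    then have qs: "q \<in> \<sigma>" and gn: "g (\<sigma> - {q}) \<noteq> 0" by (auto simp: cone_def split: if_splits)
    from gsupp[OF gn] have "jn E V p (\<sigma> - {q})" "jn E V q (\<sigma> - {q})" by auto
    then have "jn E V p (insert q (\<sigma> - {q}))" using pq unfolding jn_def by blast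
    then show ?thesis using qs by (simp add: insert_absorb)
  qed
  have hp: "bdry E V (Suc (Suc j)) (cone E V p (Suc (Suc j)) z') + cone E V p (Suc j) (bdry E V (Suc j) z') = z'"
    by (rule homotopy[OF V z'c Hz'])
  then have "z' = bdry E V (Suc (Suc j)) (cone E V p (Suc (Suc j)) z')"
    using z'b by (simp add: cone_zero)
  then have "z = bdry E V (Suc (Suc j)) (cone E V p (Suc (Suc j)) z' + cone E V q (Suc (Suc j)) zq)"
    using z'eq by (simp add: bdry_add)
  moreover have "cone E V p (Suc (Suc j)) z' + cone E V q (Suc (Suc j)) zq \<in> chains E V (Suc (Suc (Suc j)))"
    by (rule chains_add[OF cone_chain cone_chain])
  ultimately show ?thesis unfolding boundaries_def by blast
qed

definition delta :: "nat set \<Rightarrow> nat set \<Rightarrow> 'k::field" where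
  "delta \<sigma> = (\<lambda>\<rho>. if \<rho> = \<sigma> then 1 else 0)"

lemma simplices_finite: "finite V \<Longrightarrow> finite (simplices E V k)"
  by (rule finite_subset[of _ "Pow V"]) (auto simp: simplices_def)

lemma chains_span:
  assumes V: "finite V"
  shows "chains E V k \<subseteq> CS.span ((delta :: nat set \<Rightarrow> nat set \<Rightarrow> 'k::field) ` simplices E V k)"
proof
  fix f :: "nat set \<Rightarrow> 'k" assume f: "f \<in> chains E V k"
  have "f = (\<Sum>\<sigma>\<in>simplices E V k. chain_scale (f \<sigma>) (delta \<sigma>))"
  proof
    fix \<rho>
    have "(\<Sum>\<sigma>\<in>simplices E V k. chain_scale (f \<sigma>) (delta \<sigma>)) \<rho> = (\<Sum>\<sigma>\<in>simplices E V k. f \<sigma> * (if \<rho> = \<sigma> then 1 else 0))"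
      by (simp add: sum_fun_apply chain_scale_def delta_def)
    also have "\<dots> = f \<rho>"
      using f simplices_finite[OF V] by (auto simp: chains_def if_distrib cong: if_cong)
    finally show "f \<rho> = (\<Sum>\<sigma>\<in>simplices E V k. chain_scale (f \<sigma>) (delta \<sigma>)) \<rho>" by simp
  qed
  also have "\<dots> \<in> CS.span (delta ` simplices E V k)"
    by (intro CS.span_sum CS.span_scale CS.span_base) auto
  finally show "f \<in> CS.span (delta ` simplices E V k)" .
qed

lemma dim_le_aux:
  fixes A B S :: "(nat set \<Rightarrow> 'k::field) set"
  assumes V: "finite V" and B: "B \<subseteq> chains E V k"
    and AS: "A \<subseteq> CS.span (B \<union> S)" and S: "finite S"
  shows "CS.dim A \<le> CS.dim B + card S"
proof -
  obtain b where b: "b \<subseteq> B" "CS.independent b" "B \<subseteq> CS.span b" "card b = CS.dim B"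
    by (rule CS.basis_exists)
  have "b \<subseteq> CS.span ((delta :: nat set \<Rightarrow> nat set \<Rightarrow> 'k) ` simplices E V k)"
    using b(1) B chains_span[OF V] by blast
  then have fb: "finite b"
    using CS.independent_span_bound[OF finite_imageI[OF simplices_finite[OF V]] b(2)] by blast
  have "B \<union> S \<subseteq> CS.span (b \<union> S)"
    using b(3) CS.span_mono[of b "b \<union> S"] CS.span_superset[of "b \<union> S"] by blast
  then have "CS.span (B \<union> S) \<subseteq> CS.span (b \<union> S)"
    using CS.span_minimal CS.subspace_span by blast
  then have "A \<subseteq> CS.span (b \<union> S)" using AS by blast
  then have "CS.dim A \<le> card (b \<union> S)" using fb S by (intro CS.dim_le_card) auto
  also have "\<dots> \<le> card b + card S" by (rule card_Un_le)
  finally show ?thesis using b(4) by simp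
qed

lemma dim_ge_aux:
  fixes A S :: "(nat set \<Rightarrow> 'k::field) set"
  assumes V: "finite V" and A: "A \<subseteq> chains E V k"
    and SA: "S \<subseteq> A" and S: "CS.independent S"
  shows "card S \<le> CS.dim A"
proof -
  obtain b where b: "S \<subseteq> b" "b \<subseteq> A" "CS.independent b" "A \<subseteq> CS.span b"
    using CS.maximal_independent_subset_extend[OF SA S] by blast
  have "b \<subseteq> CS.span ((delta :: nat set \<Rightarrow> nat set \<Rightarrow> 'k) ` simplices E V k)"
    using b(2) A chains_span[OF V] by blast
  then have fb: "finite b"
    using CS.independent_span_bound[OF finite_imageI[OF simplices_finite[OF V]] b(3)] by blast
  have "card b = CS.dim A" by (rule CS.basis_card_eq_dim[OF b(2,4,3)])
  then show ?thesis using card_mono[OF fb b(1)] by simp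
qed




locale bip =
  fixes E :: "nat \<Rightarrow> nat \<Rightarrow> bool" and n l :: nat
  assumes l1: "1 \<le> l" and ln: "l < n"
    and EV: "\<And>i j. E i j \<Longrightarrow> i \<in> {1..n} \<and> j \<in> {1..n} \<and> i \<noteq> j"
    and Esym: "\<And>i j. E i j \<Longrightarrow> E j i"
    and hub: "\<And>i j. E i j \<Longrightarrow> i \<le> l \<Longrightarrow> l < j \<Longrightarrow> E 1 j \<and> E i n"
    and full: "\<And>a b. E a b \<Longrightarrow> (a \<le> l \<longleftrightarrow> b \<le> l) \<Longrightarrow> (\<forall>i j. 1 \<le> i \<and> i \<le> l \<and> l < j \<and> j \<le> n \<longrightarrow> E i j)"
    and coneN: "\<And>a b. E a b \<Longrightarrow> a \<le> l \<Longrightarrow> b \<le> l \<Longrightarrow> b \<noteq> l \<Longrightarrow> E l b"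
    and coneP: "\<And>a b. E a b \<Longrightarrow> l < a \<Longrightarrow> l < b \<Longrightarrow> b \<noteq> l+1 \<Longrightarrow> E (l+1) b"
begin

lemma two_elems: "finite B \<Longrightarrow> 2 \<le> card B \<Longrightarrow> y \<in> B \<Longrightarrow> \<exists>y'\<in>B. y' \<noteq> y"
proof (rule ccontr)
  assume "finite B" "2 \<le> card B" "y \<in> B" "\<not> (\<exists>y'\<in>B. y' \<noteq> y)"
  then have "B = {y}" by blast
  then show False using \<open>2 \<le> card B\<close> by simp
qed

lemma cover:
  assumes allc: "\<forall>i j. 1 \<le> i \<and> i \<le> l \<and> l < j \<and> j \<le> n \<longrightarrow> E i j"
    and s: "\<sigma> \<in> simplices E {1..n} (Suc (Suc j))"
  shows "jn E {1..n} (l+1) \<sigma> \<or> jn E {1..n} l \<sigma>"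
proof -
  have sV: "\<sigma> \<subseteq> {1..n}" and sc: "card \<sigma> = Suc (Suc (Suc j))"
    and cl: "\<And>a b. a \<in> \<sigma> \<Longrightarrow> b \<in> \<sigma> \<Longrightarrow> a \<noteq> b \<Longrightarrow> E a b"
    using s by (auto simp: simplices_def)
  have fs: "finite \<sigma>" using sV finite_subset by blast
  let ?A = "{x\<in>\<sigma>. x \<le> l}" and ?B = "{x\<in>\<sigma>. l < x}"
  have "\<sigma> = ?A \<union> ?B" by auto
  moreover have "?A \<inter> ?B = {}" by auto
  ultimately have "card ?A + card ?B = card \<sigma>" using fs
    by (metis (no_types, lifting) card_Un_disjoint finite_Un)
  then have cases: "2 \<le> card ?B \<or> 2 \<le> card ?A" using sc by linarith
  have fA: "finite ?A" "finite ?B" using fs by auto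
  show ?thesis
  proof (cases "2 \<le> card ?B")
    case True
    have "jn E {1..n} (l+1) \<sigma>"
      unfolding jn_def
    proof (intro conjI ballI impI)
      show "insert (l + 1) \<sigma> \<subseteq> {1..n}" using sV ln by auto
      have E1: "E (l+1) y" if y: "y \<in> \<sigma>" "y \<noteq> l+1" for y
      proof (cases "y \<le> l")
        case True
        then have "E y (l+1)" using allc sV y ln by auto
        then show ?thesis by (rule Esym)
      next
        case False
        then have yB: "y \<in> ?B" using y by auto
        obtain y' where "y' \<in> ?B" "y' \<noteq> y" using two_elems[OF fA(2) \<open>2 \<le> card ?B\<close> yB] by blast
        then have "E y' y" using cl y by auto
        then show ?thesis using coneP \<open>y' \<in> ?B\<close> False y by auto
      qed
      fix a b assume "a \<in> insert (l+1) \<sigma>" "b \<in> insert (l+1) \<sigma>" "a \<noteq> b"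
      then show "E a b" using E1 Esym cl by blast
    qed
    then show ?thesis by blast
  next
    case False
    then have A2: "2 \<le> card ?A" using cases by blast
    have "jn E {1..n} l \<sigma>"
      unfolding jn_def
    proof (intro conjI ballI impI)
      show "insert l \<sigma> \<subseteq> {1..n}" using sV ln l1 by auto
      have E1: "E l y" if y: "y \<in> \<sigma>" "y \<noteq> l" for y
      proof (cases "y \<le> l")
        case False
        then show ?thesis using allc sV y l1 by auto
      next
        case True
        then have yA: "y \<in> ?A" using y by auto
        obtain y' where "y' \<in> ?A" "y' \<noteq> y" using two_elems[OF fA(1) A2 yA] by blast
        then have "E y' y" using cl y by auto
        then show ?thesis using coneN \<open>y' \<in> ?A\<close> True y by auto
      qed
      fix a b assume "a \<in> insert l \<sigma>" "b \<in> insert l \<sigma>" "a \<noteq> b"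
      then show "E a b" using E1 Esym cl by blast
    qed
    then show ?thesis by blast
  qed
qed

lemma intra_exists:
  assumes s: "\<sigma> \<in> simplices E {1..n} (Suc (Suc j))"
  shows "\<forall>i j. 1 \<le> i \<and> i \<le> l \<and> l < j \<and> j \<le> n \<longrightarrow> E i j"
proof -
  have sV: "\<sigma> \<subseteq> {1..n}" and sc: "card \<sigma> = Suc (Suc (Suc j))"
    and cl: "\<And>a b. a \<in> \<sigma> \<Longrightarrow> b \<in> \<sigma> \<Longrightarrow> a \<noteq> b \<Longrightarrow> E a b"
    using s by (auto simp: simplices_def)
  have fs: "finite \<sigma>" using sV finite_subset by blast
  let ?A = "{x\<in>\<sigma>. x \<le> l}" and ?B = "{x\<in>\<sigma>. l < x}"
  have "\<sigma> = ?A \<union> ?B" by auto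
  moreover have "?A \<inter> ?B = {}" by auto
  ultimately have "card ?A + card ?B = card \<sigma>" using fs
    by (metis (no_types, lifting) card_Un_disjoint finite_Un)
  then have cases: "2 \<le> card ?B \<or> 2 \<le> card ?A" using sc by linarith
  have fA: "finite ?A" "finite ?B" using fs by auto
  obtain a b where ab: "a \<in> \<sigma>" "b \<in> \<sigma>" "a \<noteq> b" "a \<le> l \<longleftrightarrow> b \<le> l"
  proof (cases "2 \<le> card ?B")
    case True
    have "?B \<noteq> {}" using True by (intro notI) simp
    then obtain y where "y \<in> ?B" by blast
    moreover obtain y' where "y' \<in> ?B" "y' \<noteq> y" using two_elems[OF fA(2) True \<open>y \<in> ?B\<close>] by blast
    ultimately show ?thesis using that by auto
  next
    case False
    then have A2: "2 \<le> card ?A" using cases by blast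
    have "?A \<noteq> {}" using A2 by (intro notI) simp
    then obtain y where "y \<in> ?A" by blast
    moreover obtain y' where "y' \<in> ?A" "y' \<noteq> y" using two_elems[OF fA(1) A2 \<open>y \<in> ?A\<close>] by blast
    ultimately show ?thesis using that by auto
  qed
  then have "E a b" using cl by blast
  then show ?thesis by (rule full[OF _ ab(4)])
qed

lemma betti_high:
  assumes k: "2 \<le> k"
  shows "betti (K :: 'k::field itself) E {1..n} k = 0"
proof -
  obtain j where kj: "k = Suc (Suc j)" using k by (metis add_2_eq_Suc le_Suc_ex)
  let ?Z = "cycles E {1..n} k :: (nat set \<Rightarrow> 'k) set"
  let ?B = "boundaries E {1..n} k :: (nat set \<Rightarrow> 'k) set"
  have "CS.dim ?Z \<le> CS.dim ?B"
  proof (cases "simplices E {1..n} k = {}")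
    case True
    have "?Z \<subseteq> CS.span ({} \<union> {})"
    proof
      fix f assume "f \<in> ?Z"
      then have "f \<in> chains E {1..n} k" by (simp add: cycles_def kj)
      then have "f = 0" using True by (auto simp: chains_def fun_eq_iff)
      then show "f \<in> CS.span ({} \<union> {})" by (simp add: CS.span_zero)
    qed
    then have "CS.dim ?Z \<le> card ({} :: (nat set \<Rightarrow> 'k) set)" by (intro CS.dim_le_card) auto
    then show ?thesis by simp
  next
    case False
    then obtain \<sigma> where s: "\<sigma> \<in> simplices E {1..n} (Suc (Suc j))" using kj by blast
    have allc: "\<forall>i j. 1 \<le> i \<and> i \<le> l \<and> l < j \<and> j \<le> n \<longrightarrow> E i j" by (rule intra_exists[OF s])
    have pq: "E (l+1) l" "E l (l+1)" using allc l1 ln by (auto intro: Esym)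
    have "?Z \<subseteq> ?B"
    proof
      fix z assume "z \<in> ?Z"
      then show "z \<in> ?B" unfolding kj
        by (intro cone_kill[where E=E and p="l+1" and q=l, OF _ pq(1) pq(2)]) (use cover[OF allc] in auto)
    qed
    then have "?Z \<subseteq> CS.span (?B \<union> {})" using CS.span_superset by blast
    moreover have "?B \<subseteq> chains E {1..n} k" by (auto simp: boundaries_def bdry_chain)
    ultimately show ?thesis using dim_le_aux[of "{1..n}" ?B E k ?Z "{}"] by simp
  qed
  then show ?thesis by (simp add: betti_def)
qed

lemma edge_simp: "E a b \<Longrightarrow> {a,b} \<in> simplices E {1..n} 1"
  using EV[of a b] Esym[of a b] by (auto simp: simplices_def)

lemma simp1_cases:
  assumes "\<rho> \<in> simplices E {1..n} 1"
  obtains a b where "\<rho> = {a,b}" "a \<noteq> b" "E a b" "a \<in> {1..n}" "b \<in> {1..n}"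
proof -
  have "card \<rho> = 2" using assms by (simp add: simplices_def)
  then obtain a b where ab: "\<rho> = {a,b}" "a \<noteq> b" by (auto simp: card_2_iff)
  then have "E a b" "a \<in> {1..n}" "b \<in> {1..n}" using assms by (auto simp: simplices_def)
  then show ?thesis using that ab by blast
qed

lemma simp0: "{v} \<in> simplices E {1..n} 0 \<longleftrightarrow> v \<in> {1..n}"
  by (auto simp: simplices_def)

lemma bdry_delta_edge:
  assumes ab: "a < b" "E a b"
  shows "bdry E {1..n} 0 (delta {a,b} :: nat set \<Rightarrow> 'k::field) = delta {b} - delta {a}"
proof
  fix \<tau>
  have aV: "a \<in> {1..n}" "b \<in> {1..n}" using EV[OF ab(2)] by auto
  have dc: "(delta {a,b} :: nat set \<Rightarrow> 'k) \<in> chains E {1..n} (Suc 0)"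
    using edge_simp[OF ab(2)] by (auto simp: chains_def delta_def)
  show "bdry E {1..n} 0 (delta {a,b}) \<tau> = (delta {b} - delta {a} :: nat set \<Rightarrow> 'k) \<tau>"
  proof (cases "\<tau> \<in> simplices E {1..n} 0")
    case False
    then have "\<tau> \<noteq> {a}" "\<tau> \<noteq> {b}" using aV simp0 by auto
    then show ?thesis using False by (simp add: bdry_def delta_def)
  next
    case True
    then obtain v where tv: "\<tau> = {v}" "v \<in> {1..n}" by (auto simp: simplices_def card_1_singleton_iff)
    have B: "bdry E {1..n} 0 (delta {a,b}) \<tau> = (\<Sum>w\<in>{1..n}-{v}. sg {v} w * (delta {a,b} :: nat set \<Rightarrow> 'k) (insert w {v}))"
      unfolding tv(1) by (rule bdry_alt[OF _ _ _ dc]) (use tv in auto)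
    show ?thesis
    proof (cases "v = a")
      case True
      have "(\<Sum>w\<in>{1..n}-{v}. sg {v} w * (delta {a,b} :: nat set \<Rightarrow> 'k) (insert w {v}))
          = (if b \<in> {1..n}-{v} then sg {v} b * (delta {a,b} :: nat set \<Rightarrow> 'k) (insert b {v}) else 0)"
        by (rule sum_single) (use True ab in \<open>auto simp: delta_def doubleton_eq_iff\<close>)
      also have "\<dots> = - 1"
      proof -
        have "{u\<in>{a}. u < b} = {a}" using ab by auto
        then have "sg {a} b = (- 1 :: 'k)" by (simp add: sg_def)
        then show ?thesis using True ab aV by (simp add: delta_def insert_commute)
      qed
      finally show ?thesis using B True tv ab by (simp add: delta_def)
    next
      case na: False
      show ?thesis
      proof (cases "v = b")
        case True
        have "(\<Sum>w\<in>{1..n}-{v}. sg {v} w * (delta {a,b} :: nat set \<Rightarrow> 'k) (insert w {v}))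
            = (if a \<in> {1..n}-{v} then sg {v} a * (delta {a,b} :: nat set \<Rightarrow> 'k) (insert a {v}) else 0)"
          by (rule sum_single) (use True ab in \<open>auto simp: delta_def doubleton_eq_iff\<close>)
        also have "\<dots> = 1"
        proof -
          have "card {u\<in>{b}. u < a} = 0" using ab by auto
          then have "sg {b} a = (1 :: 'k)" unfolding sg_def by (simp only: power_0)
          then show ?thesis using True ab aV by (simp add: delta_def)
        qed
        finally show ?thesis using B True tv ab by (simp add: delta_def)
      next
        case False
        have "(\<Sum>w\<in>{1..n}-{v}. sg {v} w * (delta {a,b} :: nat set \<Rightarrow> 'k) (insert w {v})) = 0"
          by (rule sum.neutral) (use False na in \<open>auto simp: delta_def doubleton_eq_iff\<close>)
        then show ?thesis using B False na tv by (simp add: delta_def)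
      qed
    qed
  qed
qed

end

definition sq :: "nat \<Rightarrow> nat \<Rightarrow> nat \<Rightarrow> nat set \<Rightarrow> 'k::field" where
  "sq n i j = delta {1,j} - delta {i,j} + delta {i,n} - delta {1,n}"

context bip begin

definition Ip where "Ip = {p. 2 \<le> fst p \<and> fst p \<le> l \<and> l < snd p \<and> snd p < n \<and> E (fst p) (snd p)}"

lemma Ip_sub: "Ip \<subseteq> {2..l} \<times> {l+1..n-1}"
  by (auto simp: Ip_def)

lemma Ip_finite: "finite Ip"
  using Ip_sub finite_subset by blast

lemma Ip_card: "card Ip \<le> (l - 1) * (n - l - 1)"
proof -
  have "card Ip \<le> card ({2..l} \<times> {l+1..n-1})" by (rule card_mono[OF _ Ip_sub]) simp
  also have "\<dots> = (l - 1) * (n - l - 1)" by (simp add: card_cartesian_product)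
  finally show ?thesis .
qed

lemma sq_cycle:
  assumes p: "(i,j) \<in> Ip"
  shows "(sq n i j :: nat set \<Rightarrow> 'k::field) \<in> cycles E {1..n} 1"
proof -
  have ij: "2 \<le> i" "i \<le> l" "l < j" "j < n" "E i j" using p by (auto simp: Ip_def)
  have e1: "E 1 j" "E i n" using hub[OF ij(5) ij(2,3)] by auto
  have e2: "E 1 n" using hub[OF e1(1) l1 ij(3)] by auto
  have c: "(sq n i j :: nat set \<Rightarrow> 'k) \<in> chains E {1..n} 1"
    using edge_simp[OF e1(1)] edge_simp[OF e1(2)] edge_simp[OF e2] edge_simp[OF ij(5)]
    by (auto simp: chains_def sq_def delta_def)
  have d1: "bdry E {1..n} 0 (delta {1,j} :: nat set \<Rightarrow> 'k) = delta {j} - delta {1}"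
    by (rule bdry_delta_edge) (use ij l1 e1 in auto)
  have d2: "bdry E {1..n} 0 (delta {i,j} :: nat set \<Rightarrow> 'k) = delta {j} - delta {i}"
    by (rule bdry_delta_edge) (use ij l1 e1 in auto)
  have d3: "bdry E {1..n} 0 (delta {i,n} :: nat set \<Rightarrow> 'k) = delta {n} - delta {i}"
    by (rule bdry_delta_edge) (use ij l1 e1 in auto)
  have d4: "bdry E {1..n} 0 (delta {1,n} :: nat set \<Rightarrow> 'k) = delta {n} - delta {1}"
    by (rule bdry_delta_edge) (use ij l1 e2 in auto)
  have "bdry E {1..n} 0 (sq n i j :: nat set \<Rightarrow> 'k) =
     (delta {j} - delta {1}) - (delta {j} - delta {i}) + (delta {n} - delta {i}) - (delta {n} - delta {1})"
    unfolding sq_def bdry_diff bdry_add d1 d2 d3 d4 ..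
  also have "\<dots> = 0" by (simp add: fun_eq_iff)
  finally show ?thesis using c by (simp add: cycles_def zero_fun_def)
qed

lemma sq_apply: "(sq n i j :: nat set \<Rightarrow> 'k::field) \<rho> = (if \<rho> = {1,j} then 1 else 0) - (if \<rho> = {i,j} then 1 else 0)
   + (if \<rho> = {i,n} then 1 else 0) - (if \<rho> = {1,n} then 1 else 0)"
  by (simp add: sq_def delta_def)

lemma sq_zero_N: "(i,j) \<in> Ip \<Longrightarrow> a \<le> l \<Longrightarrow> b \<le> l \<Longrightarrow> (sq n i j :: nat set \<Rightarrow> 'k::field) {a,b} = 0"
  using ln by (auto simp: sq_apply doubleton_eq_iff Ip_def)

lemma sq_zero_P: "(i,j) \<in> Ip \<Longrightarrow> l < a \<Longrightarrow> l < b \<Longrightarrow> (sq n i j :: nat set \<Rightarrow> 'k::field) {a,b} = 0"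
  using l1 by (auto simp: sq_apply doubleton_eq_iff Ip_def)

lemma sq_cross: "(i,j) \<in> Ip \<Longrightarrow> 2 \<le> a \<Longrightarrow> a \<le> l \<Longrightarrow> l < b \<Longrightarrow> b < n \<Longrightarrow>
   (sq n i j :: nat set \<Rightarrow> 'k::field) {a,b} = (if a = i \<and> b = j then -1 else 0)"
  using l1 by (auto simp: sq_apply doubleton_eq_iff Ip_def)

lemma tri_simp:
  assumes "a \<in> {1..n}" "b \<in> {1..n}" "c \<in> {1..n}" "a \<noteq> b" "a \<noteq> c" "b \<noteq> c"
    "E a b" "E a c" "E b c"
  shows "{a,b,c} \<in> simplices E {1..n} 2"
  using assms Esym[of a b] Esym[of a c] Esym[of b c] by (auto simp: simplices_def)

lemma leaf:
  fixes r :: "nat set \<Rightarrow> 'k::field"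
  assumes rc: "r \<in> chains E {1..n} 1" and rb: "bdry E {1..n} 0 r = 0"
    and v: "v \<in> {1..n}" and u: "u \<in> {1..n}" "u \<noteq> v"
    and others: "\<And>w. w \<in> {1..n} \<Longrightarrow> w \<noteq> v \<Longrightarrow> w \<noteq> u \<Longrightarrow> r {w,v} = 0"
  shows "r {u,v} = 0"
proof -
  have "bdry E {1..n} 0 r {v} = (\<Sum>w\<in>{1..n}-{v}. sg {v} w * r (insert w {v}))"
  proof -
    have rc': "r \<in> chains E {1..n} (Suc 0)" using rc by (metis One_nat_def)
    show ?thesis by (rule bdry_alt[OF _ _ _ rc']) (use v in auto)
  qed
  also have "\<dots> = (if u \<in> {1..n}-{v} then sg {v} u * r (insert u {v}) else 0)"
    by (rule sum_single) (use others in auto)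
  also have "\<dots> = sg {v} u * r {u,v}" using u by simp
  finally have "sg {v} u * r {u,v} = 0" using rb by simp
  then show ?thesis by simp
qed

lemma cycle_span:
  fixes z :: "nat set \<Rightarrow> 'k::field"
  assumes z: "z \<in> cycles E {1..n} 1"
  shows "z \<in> CS.span (boundaries E {1..n} 1 \<union> (\<lambda>p. sq n (fst p) (snd p)) ` Ip)"
proof -
  let ?V = "{1..n}"
  have zc: "z \<in> chains E ?V 1" and zb: "bdry E ?V 0 z = 0"
    using z by (auto simp: cycles_def zero_fun_def)
  define y :: "nat set \<Rightarrow> 'k" where "y = (\<lambda>\<sigma>. if \<sigma> \<in> simplices E ?V 2 \<and> n \<in> \<sigma> \<and> \<sigma> - {n} \<subseteq> {..l} then z (\<sigma> - {n})
      else if \<sigma> \<in> simplices E ?V 2 \<and> 1 \<in> \<sigma> \<and> \<sigma> - {1} \<subseteq> {l<..} then z (\<sigma> - {1}) else 0)"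
  have yc: "y \<in> chains E ?V 2" unfolding chains_def y_def by auto
  have y0: "y \<sigma> = 0" if "\<not> (n \<in> \<sigma> \<and> \<sigma> - {n} \<subseteq> {..l})" "\<not> (1 \<in> \<sigma> \<and> \<sigma> - {1} \<subseteq> {l<..})" for \<sigma>
    using that unfolding y_def by auto
  have y1: "y \<sigma> = z (\<sigma> - {n})" if "\<sigma> \<in> simplices E ?V 2" "n \<in> \<sigma>" "\<sigma> - {n} \<subseteq> {..l}" for \<sigma>
    using that unfolding y_def by auto
  have y2: "y \<sigma> = z (\<sigma> - {1})" if "\<sigma> \<in> simplices E ?V 2" "\<not> (n \<in> \<sigma> \<and> \<sigma> - {n} \<subseteq> {..l})" "1 \<in> \<sigma>" "\<sigma> - {1} \<subseteq> {l<..}" for \<sigma>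
    using that unfolding y_def by auto
  define Q :: "nat set \<Rightarrow> 'k" where "Q = (\<Sum>p\<in>Ip. chain_scale (z {fst p, snd p}) (sq n (fst p) (snd p)))"
  define r where "r = z - bdry E ?V 1 y + Q"
  have sqc: "p \<in> Ip \<Longrightarrow> (sq n (fst p) (snd p) :: nat set \<Rightarrow> 'k) \<in> chains E ?V 1
     \<and> bdry E ?V 0 (sq n (fst p) (snd p) :: nat set \<Rightarrow> 'k) = 0" for p
    using sq_cycle[of "fst p" "snd p"] by (auto simp: cycles_def zero_fun_def)
  have Qc: "Q \<in> chains E ?V 1" unfolding Q_def
    by (rule chains_sum, rule chains_scale) (use sqc in blast)
  have rc: "r \<in> chains E ?V 1" unfolding r_def
    by (intro chains_add chains_diff zc Qc) (simp add: bdry_chain)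
  have Qb: "bdry E ?V 0 Q = 0"
  proof -
    have "bdry E ?V 0 Q = (\<Sum>p\<in>Ip. chain_scale (z {fst p, snd p}) (bdry E ?V 0 (sq n (fst p) (snd p))))"
      unfolding Q_def bdry_sum bdry_scale ..
    also have "\<dots> = (\<Sum>p\<in>Ip. 0)"
    proof (rule sum.cong[OF refl])
      fix p assume "p \<in> Ip"
      then have "bdry E ?V 0 (sq n (fst p) (snd p) :: nat set \<Rightarrow> 'k) = 0" using sqc by blast
      then show "chain_scale (z {fst p, snd p}) (bdry E ?V 0 (sq n (fst p) (snd p))) = (0 :: nat set \<Rightarrow> 'k)"
        by (simp add: chain_scale_def fun_eq_iff)
    qed
    finally show ?thesis by simp
  qed
  have rb: "bdry E ?V 0 r = 0"
  proof -
    have "bdry E ?V 0 (bdry E ?V 1 y) = 0"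
      using bdry_bdry[of ?V y E 0] yc by (simp add: numeral_2_eq_2)
    then show ?thesis unfolding r_def bdry_add bdry_diff using zb Qb by simp
  qed
  have Qv: "Q \<rho> = (\<Sum>p\<in>Ip. z {fst p, snd p} * sq n (fst p) (snd p) \<rho>)" for \<rho>
    by (simp add: Q_def sum_fun_apply chain_scale_def)
  have rv: "r \<rho> = z \<rho> - bdry E ?V 1 y \<rho> + Q \<rho>" for \<rho> by (simp add: r_def)
  have Yv: "bdry E ?V 1 y {a,b} = (\<Sum>w\<in>?V-{a,b}. sg {a,b} w * y (insert w {a,b}))"
    if "a \<in> ?V" "b \<in> ?V" "a \<noteq> b" for a b
  proof -
    have yc': "y \<in> chains E {1..n} (Suc 1)" using yc by (metis Suc_1)
    show ?thesis by (rule bdry_alt[OF _ _ _ yc']) (use that in auto)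
  qed
  have nonedge: "r {a,b} = 0" if "\<not> E a b" for a b
  proof -
    have "{a,b} \<notin> simplices E ?V 1" using that Esym[of b a] by (auto simp: simplices_def)
    then show ?thesis using rc by (simp add: chains_def)
  qed
  have RN: "r {a,b} = 0" if ab: "a \<in> ?V" "b \<in> ?V" "a \<noteq> b" "a \<le> l" "b \<le> l" for a b
  proof (cases "E a b")
    case False then show ?thesis by (rule nonedge)
  next
    case True
    have allc: "\<forall>i j. 1 \<le> i \<and> i \<le> l \<and> l < j \<and> j \<le> n \<longrightarrow> E i j" using full[OF True] ab by auto
    have En: "E a n" "E b n" using allc ab ln by auto
    have "bdry E ?V 1 y {a,b} = (if n \<in> ?V-{a,b} then sg {a,b} n * y (insert n {a,b}) else 0)"
      unfolding Yv[OF ab(1-3)]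
    proof (rule sum_single)
      fix w assume w: "w \<in> ?V - {a,b}" "w \<noteq> n"
      show "sg {a,b} w * y (insert w {a,b}) = 0"
      proof -
        have "n \<noteq> w" "n \<noteq> a" "n \<noteq> b" using w(2) ab(4,5) ln by auto
        then have "\<not> (n \<in> insert w {a,b} \<and> insert w {a,b} - {n} \<subseteq> {..l})" by blast
        moreover have "\<not> (1 \<in> insert w {a,b} \<and> insert w {a,b} - {1} \<subseteq> {l<..})"
        proof (cases "a = 1")
          case True then have "b \<in> insert w {a,b} - {1}" "b \<notin> {l<..}" using ab(3,5) by auto
          then show ?thesis by blast
        next
          case False then have "a \<in> insert w {a,b} - {1}" "a \<notin> {l<..}" using ab(4) by auto
          then show ?thesis by blast
        qed
        ultimately have "y (insert w {a,b}) = 0" by (rule y0)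
        then show ?thesis by simp
      qed
    qed simp
    also have "\<dots> = sg {a,b} n * y (insert n {a,b})" using ab ln by auto
    also have "y (insert n {a,b}) = z {a,b}"
    proof -
      have "{a,b,n} \<in> simplices E ?V 2"
        by (rule tri_simp) (use ab ln En True in auto)
      moreover have "insert n {a,b} - {n} = {a,b}" using ab ln by auto
      ultimately show ?thesis using ab y1[of "insert n {a,b}"] by (simp add: insert_commute)
    qed
    also have "sg {a,b} n = (1::'k)"
    proof -
      have "{u\<in>{a,b}. u < n} = {a,b}" using ab ln by auto
      then have "card {u\<in>{a,b}. u < n} = 2" using ab by simp
      then show ?thesis unfolding sg_def by simp
    qed
    finally have Y: "bdry E ?V 1 y {a,b} = z {a,b}" by simp
    have "Q {a,b} = 0" unfolding Qv
      by (rule sum.neutral) (use ab in \<open>auto simp: sq_zero_N\<close>)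
    then show ?thesis using Y by (simp add: rv)
  qed
  have RP: "r {a,b} = 0" if ab: "a \<in> ?V" "b \<in> ?V" "a \<noteq> b" "l < a" "l < b" for a b
  proof (cases "E a b")
    case False then show ?thesis by (rule nonedge)
  next
    case True
    have allc: "\<forall>i j. 1 \<le> i \<and> i \<le> l \<and> l < j \<and> j \<le> n \<longrightarrow> E i j" using full[OF True] ab by auto
    have E1: "E 1 a" "E 1 b" using allc ab l1 by auto
    have "bdry E ?V 1 y {a,b} = (if 1 \<in> ?V-{a,b} then sg {a,b} 1 * y (insert 1 {a,b}) else 0)"
      unfolding Yv[OF ab(1-3)]
    proof (rule sum_single)
      fix w assume w: "w \<in> ?V - {a,b}" "w \<noteq> 1"
      show "sg {a,b} w * y (insert w {a,b}) = 0"
      proof -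
        have "\<not> (n \<in> insert w {a,b} \<and> insert w {a,b} - {n} \<subseteq> {..l})"
        proof (cases "a = n")
          case True then have "b \<in> insert w {a,b} - {n}" "b \<notin> {..l}" using ab(3,5) by auto
          then show ?thesis by blast
        next
          case False then have "a \<in> insert w {a,b} - {n}" "a \<notin> {..l}" using ab(4) by auto
          then show ?thesis by blast
        qed
        moreover have "\<not> (1 \<in> insert w {a,b} \<and> insert w {a,b} - {1} \<subseteq> {l<..})"
        proof -
          have "1 \<noteq> w" "1 \<noteq> a" "1 \<noteq> b" using w(2) ab(4,5) l1 by auto
          then show ?thesis by blast
        qed
        ultimately have "y (insert w {a,b}) = 0" by (rule y0)
        then show ?thesis by simp
      qed
    qed simp
    also have "\<dots> = sg {a,b} 1 * y (insert 1 {a,b})" using ab l1 ln by auto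
    also have "y (insert 1 {a,b}) = z {a,b}"
    proof -
      have "{1,a,b} \<in> simplices E ?V 2"
        by (rule tri_simp) (use ab l1 ln E1 True in auto)
      moreover have "insert 1 {a,b} - {1} = {a,b}" using ab l1 by auto
      moreover have "\<not> insert 1 {a,b} - {n} \<subseteq> {..l}"
      proof (cases "a = n")
        case True then have "b \<in> insert 1 {a,b} - {n}" "b \<notin> {..l}" using ab(3,5) by auto
        then show ?thesis by blast
      next
        case False then have "a \<in> insert 1 {a,b} - {n}" "a \<notin> {..l}" using ab(4) by auto
        then show ?thesis by blast
      qed
      ultimately show ?thesis using y2[of "insert 1 {a,b}"] ab(4,5) by simp
    qed
    also have "sg {a,b} 1 = (1::'k)"
    proof -
      have "card {u\<in>{a,b}. u < 1} = 0" using ab by auto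
      then show ?thesis unfolding sg_def by (simp only: power_0)
    qed
    finally have Y: "bdry E ?V 1 y {a,b} = z {a,b}" by simp
    have "Q {a,b} = 0" unfolding Qv
      by (rule sum.neutral) (use ab in \<open>auto simp: sq_zero_P\<close>)
    then show ?thesis using Y by (simp add: rv)
  qed
  have RC: "r {a,b} = 0" if ab: "2 \<le> a" "a \<le> l" "l < b" "b < n" for a b
  proof (cases "E a b")
    case False then show ?thesis by (rule nonedge)
  next
    case True
    have abV: "a \<in> ?V" "b \<in> ?V" "a \<noteq> b" using ab by auto
    have Y: "bdry E ?V 1 y {a,b} = 0"
      unfolding Yv[OF abV]
    proof (rule sum.neutral, rule ballI)
      fix w assume w: "w \<in> ?V - {a,b}"
      have "\<not> (n \<in> insert w {a,b} \<and> insert w {a,b} - {n} \<subseteq> {..l})"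
      proof -
        have "b \<in> insert w {a,b} - {n}" "b \<notin> {..l}" using ab(3,4) by auto
        then show ?thesis by blast
      qed
      moreover have "\<not> (1 \<in> insert w {a,b} \<and> insert w {a,b} - {1} \<subseteq> {l<..})"
      proof -
        have "a \<in> insert w {a,b} - {1}" "a \<notin> {l<..}" using ab(1,2) by auto
        then show ?thesis by blast
      qed
      ultimately have "y (insert w {a,b}) = 0" by (rule y0)
      then show "sg {a,b} w * y (insert w {a,b}) = 0" by simp
    qed
    have "Q {a,b} = (\<Sum>p\<in>Ip. z {fst p, snd p} * (if a = fst p \<and> b = snd p then -1 else 0))"
      unfolding Qv by (rule sum.cong[OF refl]) (use ab in \<open>auto simp: sq_cross\<close>)
    also have "\<dots> = (\<Sum>p\<in>Ip. if p = (a,b) then - z {a,b} else 0)"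
      by (rule sum.cong[OF refl]) auto
    also have "\<dots> = - z {a,b}"
    proof -
      have "(a,b) \<in> Ip" using ab True by (simp add: Ip_def)
      then show ?thesis using Ip_finite by (simp add: sum.delta)
    qed
    finally show ?thesis using Y by (simp add: rv)
  qed
  have R4: "r {1,b} = 0" if b: "l < b" "b < n" for b
  proof -
    have "r {1,b} = 0"
    proof (rule leaf[OF rc rb])
      show "b \<in> ?V" "1 \<in> ?V" "1 \<noteq> b" using b l1 by auto
      fix w assume w: "w \<in> ?V" "w \<noteq> b" "w \<noteq> 1"
      show "r {w,b} = 0"
      proof (cases "w \<le> l")
        case True then show ?thesis using RC[of w b] w b by auto
      next
        case False then show ?thesis using RP[of w b] w b by auto
      qed
    qed
    then show ?thesis .
  qed
  have R5: "r {a,n} = 0" if a: "2 \<le> a" "a \<le> l" for a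
  proof -
    have "r {n,a} = 0"
    proof (rule leaf[OF rc rb])
      show "a \<in> ?V" "n \<in> ?V" "n \<noteq> a" using a ln by auto
      fix w assume w: "w \<in> ?V" "w \<noteq> a" "w \<noteq> n"
      show "r {w,a} = 0"
      proof (cases "w \<le> l")
        case True then show ?thesis using RN[of w a] w a ln by auto
      next
        case False then show ?thesis using RC[of a w] w a by (auto simp: insert_commute)
      qed
    qed
    then show ?thesis by (simp add: insert_commute)
  qed
  have R6: "r {1,n} = 0"
  proof -
    have "r {n,1} = 0"
    proof (rule leaf[OF rc rb])
      show "1 \<in> ?V" "n \<in> ?V" "n \<noteq> 1" using l1 ln by auto
      fix w assume w: "w \<in> ?V" "w \<noteq> 1" "w \<noteq> n"
      show "r {w,1} = 0"
      proof (cases "w \<le> l")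
        case True then show ?thesis using RN[of w 1] w l1 by auto
      next
        case False then show ?thesis using R4[of w] w by (auto simp: insert_commute)
      qed
    qed
    then show ?thesis by (simp add: insert_commute)
  qed
  have r0: "r = 0"
  proof
    fix \<rho>
    show "r \<rho> = 0 \<rho>"
    proof (cases "\<rho> \<in> simplices E ?V 1")
      case False then show ?thesis using rc by (simp add: chains_def)
    next
      case True
      then obtain a b where ab: "\<rho> = {a,b}" "a \<noteq> b" "E a b" "a \<in> ?V" "b \<in> ?V"
        by (rule simp1_cases)
      have key: "r {a,b} = 0" if ab: "a \<noteq> b" "a \<in> ?V" "b \<in> ?V" "a \<le> l" "l < b" for a b
      proof (cases "a = 1")
        case True
        then show ?thesis using R4[of b] R6 ab by (cases "b = n") auto
      next
        case False
        then show ?thesis using R5[of a] RC[of a b] ab by (cases "b = n") auto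
      qed
      have "r {a,b} = 0"
      proof (cases "a \<le> l")
        case True
        show ?thesis
        proof (cases "b \<le> l")
          case True then show ?thesis using RN ab \<open>a \<le> l\<close> by blast
        next
          case False then show ?thesis using key ab True by auto
        qed
      next
        case False
        show ?thesis
        proof (cases "b \<le> l")
          case True then show ?thesis using key[of b a] ab False by (auto simp: insert_commute)
        next
          case False then show ?thesis using RP ab \<open>\<not> a \<le> l\<close> by auto
        qed
      qed
      then show ?thesis using ab by simp
    qed
  qed
  then have zeq: "z = bdry E ?V 1 y - Q" unfolding r_def by (simp add: algebra_simps eq_diff_eq)
  have "bdry E ?V 1 y \<in> CS.span (boundaries E ?V 1 \<union> (\<lambda>p. sq n (fst p) (snd p)) ` Ip)"
    by (rule CS.span_base) (use yc in \<open>auto simp: boundaries_def numeral_2_eq_2\<close>)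
  moreover have "Q \<in> CS.span (boundaries E ?V 1 \<union> (\<lambda>p. sq n (fst p) (snd p)) ` Ip)"
    unfolding Q_def
    by (intro CS.span_sum CS.span_scale CS.span_base) auto
  ultimately show ?thesis unfolding zeq by (rule CS.span_diff)
qed

lemma same_side:
  assumes s: "\<sigma> \<in> simplices E {1..n} (Suc (Suc j))"
  obtains a b where "a \<in> \<sigma>" "b \<in> \<sigma>" "a \<noteq> b" "a \<le> l \<longleftrightarrow> b \<le> l" "E a b"
proof -
  have sV: "\<sigma> \<subseteq> {1..n}" and sc: "card \<sigma> = Suc (Suc (Suc j))"
    and cl: "\<And>a b. a \<in> \<sigma> \<Longrightarrow> b \<in> \<sigma> \<Longrightarrow> a \<noteq> b \<Longrightarrow> E a b"
    using s by (auto simp: simplices_def)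
  have fs: "finite \<sigma>" using sV finite_subset by blast
  let ?A = "{x\<in>\<sigma>. x \<le> l}" and ?B = "{x\<in>\<sigma>. l < x}"
  have "\<sigma> = ?A \<union> ?B" by auto
  moreover have "?A \<inter> ?B = {}" by auto
  ultimately have "card ?A + card ?B = card \<sigma>" using fs
    by (metis (no_types, lifting) card_Un_disjoint finite_Un)
  then have cases: "2 \<le> card ?B \<or> 2 \<le> card ?A" using sc by linarith
  have fA: "finite ?A" "finite ?B" using fs by auto
  obtain a b where ab: "a \<in> \<sigma>" "b \<in> \<sigma>" "a \<noteq> b" "a \<le> l \<longleftrightarrow> b \<le> l"
  proof (cases "2 \<le> card ?B")
    case True
    have "?B \<noteq> {}" using True by (intro notI) simp
    then obtain y where "y \<in> ?B" by blast
    moreover obtain y' where "y' \<in> ?B" "y' \<noteq> y" using two_elems[OF fA(2) True \<open>y \<in> ?B\<close>] by blast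
    ultimately show ?thesis using that by auto
  next
    case False
    then have A2: "2 \<le> card ?A" using cases by blast
    have "?A \<noteq> {}" using A2 by (intro notI) simp
    then obtain y where "y \<in> ?A" by blast
    moreover obtain y' where "y' \<in> ?A" "y' \<noteq> y" using two_elems[OF fA(1) A2 \<open>y \<in> ?A\<close>] by blast
    ultimately show ?thesis using that by auto
  qed
  then show ?thesis using that cl by blast
qed

lemma betti1_bound: "betti (K :: 'k::field itself) E {1..n} 1 \<le> (l - 1) * (n - l - 1)"
proof -
  let ?Z = "cycles E {1..n} 1 :: (nat set \<Rightarrow> 'k) set"
  let ?B = "boundaries E {1..n} 1 :: (nat set \<Rightarrow> 'k) set"
  let ?S = "(\<lambda>p. sq n (fst p) (snd p) :: nat set \<Rightarrow> 'k) ` Ip"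
  have "?Z \<subseteq> CS.span (?B \<union> ?S)" using cycle_span by blast
  moreover have "?B \<subseteq> chains E {1..n} 1" by (auto simp: boundaries_def bdry_chain)
  ultimately have "CS.dim ?Z \<le> CS.dim ?B + card ?S"
    using dim_le_aux[of "{1..n}" ?B E 1 ?Z ?S] Ip_finite by simp
  moreover have "card ?S \<le> (l - 1) * (n - l - 1)"
    using card_image_le[OF Ip_finite] Ip_card le_trans by blast
  ultimately show ?thesis by (simp add: betti_def)
qed

lemma betti1_eq:
  assumes bipE: "\<And>i j. E i j \<longleftrightarrow> (i \<in> {1..n} \<and> j \<in> {1..n} \<and> (i \<le> l \<longleftrightarrow> l < j))"
  shows "betti (K :: 'k::field itself) E {1..n} 1 = (l - 1) * (n - l - 1)"
proof -
  let ?Z = "cycles E {1..n} 1 :: (nat set \<Rightarrow> 'k) set"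
  let ?B = "boundaries E {1..n} 1 :: (nat set \<Rightarrow> 'k) set"
  let ?f = "\<lambda>p. sq n (fst p) (snd p) :: nat set \<Rightarrow> 'k"
  let ?S = "?f ` Ip"
  have S2: "simplices E {1..n} (Suc (Suc 0)) = {}"
  proof (rule ccontr)
    assume "simplices E {1..n} (Suc (Suc 0)) \<noteq> {}"
    then obtain \<sigma> where "\<sigma> \<in> simplices E {1..n} (Suc (Suc 0))" by blast
    then obtain a b where "a \<le> l \<longleftrightarrow> b \<le> l" "E a b" by (rule same_side)
    then show False using bipE[of a b] by auto
  qed
  have Bz: "?B \<subseteq> {0}"
  proof
    fix g assume "g \<in> ?B"
    then obtain f where f: "f \<in> chains E {1..n} (Suc 1)" "g = bdry E {1..n} 1 f"
      by (auto simp: boundaries_def)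
    have "f = 0" using f(1) S2 by (auto simp: chains_def fun_eq_iff)
    then show "g \<in> {0}" using f(2) by (simp add: bdry_zero)
  qed
  have dB: "CS.dim ?B = 0"
  proof -
    have "?B \<subseteq> CS.span {}" using Bz by auto
    then have "CS.dim ?B \<le> card ({} :: (nat set \<Rightarrow> 'k) set)" by (intro CS.dim_le_card) auto
    then show ?thesis by simp
  qed
  have Ipe: "Ip = {2..l} \<times> {l+1..n-1}"
    using Ip_sub by (auto simp: Ip_def bipE)
  have val: "?f p {fst q, snd q} = (if p = q then -1 else 0)" if "p \<in> Ip" "q \<in> Ip" for p q
  proof -
    have "(fst p, snd p) \<in> Ip" using that by simp
    have "2 \<le> fst q" "fst q \<le> l" "l < snd q" "snd q < n" using that(2) by (auto simp: Ip_def)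
    from sq_cross[OF \<open>(fst p, snd p) \<in> Ip\<close> this] show ?thesis
      by (auto simp: prod_eq_iff)
  qed
  have inj: "inj_on ?f Ip"
  proof (rule inj_onI)
    fix p q assume pq: "p \<in> Ip" "q \<in> Ip" "?f p = ?f q"
    have "?f p {fst q, snd q} = ?f q {fst q, snd q}" using pq(3) by simp
    then show "p = q" using val[OF pq(1,2)] val[OF pq(2,2)] by (auto split: if_splits)
  qed
  have cS: "card ?S = (l - 1) * (n - l - 1)"
    using card_image[OF inj] by (simp add: Ipe card_cartesian_product)
  have indep: "CS.independent ?S"
  proof (rule CS.independent_if_scalars_zero)
    show "finite ?S" using Ip_finite by simp
    fix c and s assume h: "(\<Sum>x\<in>?S. chain_scale (c x) x) = 0" and s: "s \<in> ?S"
    then obtain q where q: "q \<in> Ip" "s = ?f q" by blast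
    have "0 = (\<Sum>x\<in>?S. chain_scale (c x) x) {fst q, snd q}" using h by simp
    also have "\<dots> = (\<Sum>x\<in>?S. c x * x {fst q, snd q})" by (simp add: sum_fun_apply chain_scale_def)
    also have "\<dots> = (if s \<in> ?S then c s * s {fst q, snd q} else 0)"
    proof (rule sum_single)
      show "finite ?S" using Ip_finite by simp
      fix x assume x: "x \<in> ?S" "x \<noteq> s"
      then obtain p where p: "p \<in> Ip" "x = ?f p" by blast
      then have "p \<noteq> q" using x(2) q by auto
      then show "c x * x {fst q, snd q} = 0" using val[OF p(1) q(1)] p by simp
    qed
    also have "\<dots> = - c s" using s q val[OF q(1) q(1)] by simp
    finally show "c s = 0" by simp
  qed
  have "?S \<subseteq> ?Z" using sq_cycle by auto
  moreover have "?Z \<subseteq> chains E {1..n} 1" by (auto simp: cycles_def)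
  ultimately have ge: "card ?S \<le> CS.dim ?Z"
    using dim_ge_aux[of "{1..n}" ?Z E 1 ?S] indep by simp
  have "?Z \<subseteq> CS.span (?B \<union> ?S)" using cycle_span by blast
  moreover have "?B \<subseteq> chains E {1..n} 1" by (auto simp: boundaries_def bdry_chain)
  ultimately have le: "CS.dim ?Z \<le> CS.dim ?B + card ?S"
    using dim_le_aux[of "{1..n}" ?B E 1 ?Z ?S] Ip_finite by simp
  show ?thesis using ge le dB cS by (simp add: betti_def)
qed

end

lemma ord_mat_mono:
  assumes "M i j \<le> M a b"
  shows "ord_mat M n i j \<le> ord_mat M n a b"
  unfolding ord_mat_def
proof (rule card_mono)
  show "finite {(a', b'). 1 \<le> a' \<and> a' < b' \<and> b' \<le> n \<and> M a' b' \<le> M a b}"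
    by (rule finite_subset[of _ "{1..n} \<times> {1..n}"]) auto
  show "{(a', b'). 1 \<le> a' \<and> a' < b' \<and> b' \<le> n \<and> M a' b' \<le> M i j}
      \<subseteq> {(a', b'). 1 \<le> a' \<and> a' < b' \<and> b' \<le> n \<and> M a' b' \<le> M a b}"
    using assms by auto
qed

lemma Gt_mono:
  assumes "Gt_edge M n t a b" "i \<in> {1..n}" "j \<in> {1..n}" "i \<noteq> j" "M i j \<le> M a b"
  shows "Gt_edge M n t i j"
proof -
  have "ord_mat M n i j \<le> ord_mat M n a b" using ord_mat_mono[of M i j a b n] assms(5) by blast
  then have "real (ord_mat M n i j) \<le> real (ord_mat M n a b)" by simp
  then show ?thesis using assms unfolding Gt_edge_def by linarith
qed

lemma Gt_mono':
  assumes "Gt_edge M n t a b" "M i j \<le> M a b" "i \<in> {1..n}" "j \<in> {1..n}" "i \<noteq> j"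
  shows "Gt_edge M n t i j"
  using Gt_mono[OF assms(1,3,4,5,2)] .

theorem theorem2:
  fixes x :: "nat \<Rightarrow> real" and n l :: nat and K :: "'k::field itself"
  defines "M \<equiv> (\<lambda>i j. x i * x j)"
  assumes "n \<ge> 2" and "1 \<le> l" and "l \<le> n - 1"
    and "\<forall>i j. 1 \<le> i \<and> i \<le> j \<and> j \<le> n \<longrightarrow> x i \<le> x j"
    and "x l < 0" and "0 \<le> x (l + 1)"
    and "offdiag_distinct M n"
  shows "\<forall>t \<in> {0..1}.
      betti_curve K M n 1 t \<le> (l - 1) * (n - l - 1)
    \<and> ((\<forall>i j. Gt_edge M n t i j \<longleftrightarrow>
           (i \<in> {1..n} \<and> j \<in> {1..n} \<and> (i \<le> l \<longleftrightarrow> l < j)))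
         \<longrightarrow> betti_curve K M n 1 t = (l - 1) * (n - l - 1))
    \<and> (\<forall>k > 1. betti_curve K M n k t = 0)"
proof
  fix t :: real
  let ?E = "Gt_edge M n t"
  have ln: "l < n" using assms(2-4) by linarith
  have xs: "\<And>i j. 1 \<le> i \<Longrightarrow> i \<le> j \<Longrightarrow> j \<le> n \<Longrightarrow> x i \<le> x j" using assms(5) by blast
  have neg: "x i < 0" if "1 \<le> i" "i \<le> l" for i
    using xs[of i l] that ln assms(6) by linarith
  have pos: "0 \<le> x j" if "l < j" "j \<le> n" for j
    using xs[of "l+1" j] that ln assms(7) by linarith
  have Mc: "M i j = M j i" for i j by (simp add: M_def mult.commute)
  have EV: "?E i j \<Longrightarrow> i \<in> {1..n} \<and> j \<in> {1..n} \<and> i \<noteq> j" for i j by (simp add: Gt_edge_def)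
  interpret bip ?E n l
  proof
    show "1 \<le> l" by fact
    show "l < n" by fact
    show "\<And>i j. ?E i j \<Longrightarrow> i \<in> {1..n} \<and> j \<in> {1..n} \<and> i \<noteq> j" by (rule EV)
    show "?E j i" if "?E i j" for i j
      using Gt_mono[OF that, of j i] EV[OF that] Mc[of j i] by auto
    show "?E 1 j \<and> ?E i n" if e: "?E i j" "i \<le> l" "l < j" for i j
    proof
      have iV: "1 \<le> i" "j \<le> n" using EV[OF e(1)] by auto
      have "x 1 \<le> x i" using xs[of 1 i] iV e ln by auto
      then have "M 1 j \<le> M i j" unfolding M_def using pos[of j] e iV by (intro mult_right_mono) auto
      then show "?E 1 j" by (rule Gt_mono'[OF e(1)]) (use iV e ln in auto)
      have "x j \<le> x n" using xs[of j n] iV e ln by auto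
      then have "M i n \<le> M i j" unfolding M_def using neg[of i] e iV by (intro mult_left_mono_neg) auto
      then show "?E i n" by (rule Gt_mono'[OF e(1)]) (use iV e ln in auto)
    qed
    show "\<forall>i j. 1 \<le> i \<and> i \<le> l \<and> l < j \<and> j \<le> n \<longrightarrow> ?E i j"
      if e: "?E a b" "a \<le> l \<longleftrightarrow> b \<le> l" for a b
    proof (intro allI impI)
      fix i j assume ij: "1 \<le> i \<and> i \<le> l \<and> l < j \<and> j \<le> n"
      have abV: "1 \<le> a" "a \<le> n" "1 \<le> b" "b \<le> n" using EV[OF e(1)] by auto
      have "0 \<le> M a b"
      proof (cases "a \<le> l")
        case True
        then have "x a < 0" "x b < 0" using neg abV e(2) by auto
        then show ?thesis unfolding M_def by (simp add: zero_le_mult_iff)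
      next
        case False
        then have "0 \<le> x a" "0 \<le> x b" using pos abV e(2) by auto
        then show ?thesis unfolding M_def by simp
      qed
      moreover have "M i j \<le> 0" unfolding M_def using neg[of i] pos[of j] ij
        by (simp add: mult_nonpos_nonneg)
      ultimately show "?E i j" using ij by (intro Gt_mono[OF e(1)]) auto
    qed
    show "?E l b" if e: "?E a b" "a \<le> l" "b \<le> l" "b \<noteq> l" for a b
    proof -
      have abV: "1 \<le> a" "1 \<le> b" using EV[OF e(1)] by auto
      have "x a \<le> x l" using xs[of a l] abV e ln by auto
      then have "M l b \<le> M a b" unfolding M_def using neg[of b] e abV
        by (intro mult_right_mono_neg) auto
      then show ?thesis by (rule Gt_mono'[OF e(1)]) (use abV e ln in auto)
    qed
    show "?E (l+1) b" if e: "?E a b" "l < a" "l < b" "b \<noteq> l + 1" for a b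
    proof -
      have abV: "a \<le> n" "b \<le> n" using EV[OF e(1)] by auto
      have "x (l+1) \<le> x a" using xs[of "l+1" a] abV e ln by auto
      then have "M (l+1) b \<le> M a b" unfolding M_def using pos[of b] e abV
        by (intro mult_right_mono) auto
      then show ?thesis by (rule Gt_mono'[OF e(1)]) (use abV e ln in auto)
    qed
  qed
  show "betti_curve K M n 1 t \<le> (l - 1) * (n - l - 1)
    \<and> ((\<forall>i j. Gt_edge M n t i j \<longleftrightarrow>
           (i \<in> {1..n} \<and> j \<in> {1..n} \<and> (i \<le> l \<longleftrightarrow> l < j)))
         \<longrightarrow> betti_curve K M n 1 t = (l - 1) * (n - l - 1))
    \<and> (\<forall>k > 1. betti_curve K M n k t = 0)"
    unfolding betti_curve_def
    using betti1_bound[of K] betti1_eq[of K] betti_high[of _ K] by auto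
qed


end
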